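(* Let $\psi$ be a log-concave probability density on $\mathbb R$ with CDF $\Psi$, and let $M\ge2$. Then for every $m\in\{1,\dots,M\}$ the function $$\breve\Psi(\mathbf v;m)=\int_{\mathbb R}\psi(t)\prod_{\ell\ne m}\Psi(t+v_m-v_\ell)\,dt,\qquad\mathbf v\in\mathbb R^M,$$ is log-concave on $\mathbb R^M$. *)

theory Defs
  imports "HOL-Analysis.Analysis"
begin

definition log_concave :: "('a::real_vector \<Rightarrow> real) \<Rightarrow> bool" where
  "log_concave f \<longleftrightarrow> (\<forall>x. f x \<ge> 0) \<and>
     (\<forall>x y. \<forall>t::real. 0 \<le> t \<and> t \<le> 1 \<longrightarrow>
        f x powr (1 - t) * f y powr t \<le> f ((1 - t) *\<^sub>R x + t *\<^sub>R y))"

definition prob_density :: "(real \<Rightarrow> real) \<Rightarrow> bool" where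
  "prob_density \<psi> \<longleftrightarrow> (\<forall>x. \<psi> x \<ge> 0) \<and> integrable lborel \<psi> \<and> integral\<^sup>L lborel \<psi> = 1"

definition cdf_of :: "(real \<Rightarrow> real) \<Rightarrow> real \<Rightarrow> real" where
  "cdf_of \<psi> x = (LINT t:{..x}|lborel. \<psi> t)"

definition breve_Psi :: "(real \<Rightarrow> real) \<Rightarrow> real^'n \<Rightarrow> 'n \<Rightarrow> real" where
  "breve_Psi \<psi> v m = (LINT t|lborel. \<psi> t * (\<Prod>l\<in>UNIV - {m}. cdf_of \<psi> (t + v$m - v$l)))"

end

theory Submission imports Defs begin

lemma bm_point:
  fixes A B C :: "real set" and l a b :: real
  assumes [measurable]: "A \<in> sets borel" "B \<in> sets borel" "C \<in> sets borel"
    and l: "0 < l" "l < 1" and a: "a \<in> A" and b: "b \<in> B"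
    and sub: "\<And>x y. x \<in> A \<Longrightarrow> y \<in> B \<Longrightarrow> (1 - l) * x + l * y \<in> C"
  shows "ennreal (1 - l) * emeasure lborel (A \<inter> {..a}) + ennreal l * emeasure lborel (B \<inter> {b<..})
      \<le> emeasure lborel C"
proof -
  define z where "z = (1 - l) * a + l * b"
  have e1: "emeasure lborel (A \<inter> {..a}) = (\<integral>\<^sup>+x. indicator (A \<inter> {..a}) x \<partial>lborel)"
    by simp
  have "(\<integral>\<^sup>+x. indicator (A \<inter> {..a}) ((x - l * b) / (1 - l)) \<partial>lborel)
      = ennreal \<bar>1 - l\<bar> * (\<integral>\<^sup>+x. indicator (A \<inter> {..a}) ((l * b + (1 - l) * x - l * b) / (1 - l)) \<partial>lborel)"
    by (rule nn_integral_real_affine) (use l in auto)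
  also have "\<dots> = ennreal (1 - l) * emeasure lborel (A \<inter> {..a})"
    using l by simp
  finally have i1: "ennreal (1 - l) * emeasure lborel (A \<inter> {..a}) = (\<integral>\<^sup>+x. indicator (A \<inter> {..a}) ((x - l * b) / (1 - l)) \<partial>lborel)" ..
  have "(\<integral>\<^sup>+x. indicator (B \<inter> {b<..}) ((x - (1 - l) * a) / l) \<partial>lborel)
      = ennreal \<bar>l\<bar> * (\<integral>\<^sup>+x. indicator (B \<inter> {b<..}) (((1 - l) * a + l * x - (1 - l) * a) / l) \<partial>lborel)"
    by (rule nn_integral_real_affine) (use l in auto)
  also have "\<dots> = ennreal l * emeasure lborel (B \<inter> {b<..})"
    using l by simp
  finally have i2: "ennreal l * emeasure lborel (B \<inter> {b<..}) = (\<integral>\<^sup>+x. indicator (B \<inter> {b<..}) ((x - (1 - l) * a) / l) \<partial>lborel)" ..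
  have "ennreal (1 - l) * emeasure lborel (A \<inter> {..a}) + ennreal l * emeasure lborel (B \<inter> {b<..})
     = (\<integral>\<^sup>+x. indicator (A \<inter> {..a}) ((x - l * b) / (1 - l)) + indicator (B \<inter> {b<..}) ((x - (1 - l) * a) / l) \<partial>lborel)"
    unfolding i1 i2 by (rule nn_integral_add[symmetric]) auto
  also have "\<dots> \<le> (\<integral>\<^sup>+x. indicator C x \<partial>lborel)"
  proof (rule nn_integral_mono)
    fix x
    show "indicator (A \<inter> {..a}) ((x - l * b) / (1 - l)) + indicator (B \<inter> {b<..}) ((x - (1 - l) * a) / l) \<le> (indicator C x :: ennreal)"
    proof (cases "(x - l * b) / (1 - l) \<in> A \<inter> {..a}")
      case True
      then have "x = (1 - l) * ((x - l * b) / (1 - l)) + l * b" using l by (simp add: field_simps)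
      with True sub[of "(x - l * b) / (1 - l)" b] b have xC: "x \<in> C" by auto
      have "\<not> (x - (1 - l) * a) / l \<in> B \<inter> {b<..}"
      proof
        assume "(x - (1 - l) * a) / l \<in> B \<inter> {b<..}"
        then have "(x - (1 - l) * a) > l * b" using l by (simp add: field_simps)
        moreover have "x - l * b \<le> (1 - l) * a" using True l by (simp add: field_simps)
        ultimately show False by simp
      qed
      with True xC show ?thesis by simp
    next
      case False
      show ?thesis
      proof (cases "(x - (1 - l) * a) / l \<in> B \<inter> {b<..}")
        case True
        then have "x = (1 - l) * a + l * ((x - (1 - l) * a) / l)" using l by (simp add: field_simps)
        with True sub[of a "(x - (1 - l) * a) / l"] a have xC: "x \<in> C" by auto
        with False True show ?thesis by simp
      qed (use False in auto)
    qed
  qed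
  also have "\<dots> = emeasure lborel C" by simp
  finally show ?thesis .
qed

lemma sup_helper:
  assumes "range E \<subseteq> sets M" "incseq E" "(\<Union>n. E n) = X"
    and "\<And>n. \<exists>i\<in>I. emeasure M (E n) \<le> F i"
  shows "emeasure M X \<le> (SUP i\<in>I. F i)"
proof -
  have "emeasure M X = (SUP n. emeasure M (E n))"
    using SUP_emeasure_incseq[OF assms(1,2)] assms(3) by simp
  also have "\<dots> \<le> (SUP i\<in>I. F i)"
  proof (rule SUP_least)
    fix n
    from assms(4)[of n] obtain i where "i \<in> I" "emeasure M (E n) \<le> F i" by blast
    then show "emeasure M (E n) \<le> (SUP i\<in>I. F i)" by (meson SUP_upper2)
  qed
  finally show ?thesis .
qed

lemma supA:
  fixes A :: "real set"
  assumes [measurable]: "A \<in> sets borel" and ne: "A \<noteq> {}"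
  shows "emeasure lborel A \<le> (SUP a\<in>A. emeasure lborel (A \<inter> {..a}))"
proof (cases "bdd_above A")
  case False
  show ?thesis
  proof (rule sup_helper[where E="\<lambda>n. A \<inter> {..real n}"])
    show "range (\<lambda>n. A \<inter> {..real n}) \<subseteq> sets lborel" by auto
    show "incseq (\<lambda>n. A \<inter> {..real n})" by (auto simp: incseq_def)
    show "(\<Union>n. A \<inter> {..real n}) = A"
      using real_arch_simple by auto
    fix n
    from False obtain a where "a \<in> A" "real n < a" unfolding bdd_above_def by (meson not_le)
    then show "\<exists>a\<in>A. emeasure lborel (A \<inter> {..real n}) \<le> emeasure lborel (A \<inter> {..a})"
      by (intro bexI[of _ a] emeasure_mono) auto
  qed
next
  case True
  define S where "S = Sup A"
  have le: "x \<le> S" if "x \<in> A" for x using True that cSup_upper S_def by blast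
  show ?thesis
  proof (cases "S \<in> A")
    case True
    have "A \<inter> {..S} = A" using le by auto
    then show ?thesis using True by (metis SUP_upper)
  next
    case SA: False
    show ?thesis
    proof (rule sup_helper[where E="\<lambda>n. A \<inter> {..S - 1 / Suc n}"])
      show "range (\<lambda>n. A \<inter> {..S - 1 / Suc n}) \<subseteq> sets lborel" by auto
      show "incseq (\<lambda>n. A \<inter> {..S - 1 / Suc n})"
      proof (rule incseq_SucI)
        fix n
        have "1 / real (Suc (Suc n)) \<le> 1 / real (Suc n)" by (rule divide_left_mono) auto
        then show "A \<inter> {..S - 1 / Suc n} \<subseteq> A \<inter> {..S - 1 / Suc (Suc n)}" by auto
      qed
      show "(\<Union>n. A \<inter> {..S - 1 / Suc n}) = A"
      proof safe
        fix x assume "x \<in> A"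
        then have "x < S" using le[of x] SA by (cases "x = S") auto
        then obtain n where "inverse (real (Suc n)) < S - x"
          using reals_Archimedean by (metis diff_gt_0_iff_gt)
        then show "x \<in> (\<Union>n. A \<inter> {..S - 1 / Suc n})" using \<open>x \<in> A\<close>
          by (auto simp: inverse_eq_divide intro!: exI[of _ n])
      qed
      fix n
      have "S - 1 / Suc n < Sup A" unfolding S_def[symmetric] by simp
      then obtain a where "a \<in> A" "S - 1 / Suc n < a"
        using less_cSup_iff[OF ne True] by blast
      then show "\<exists>a\<in>A. emeasure lborel (A \<inter> {..S - 1 / Suc n}) \<le> emeasure lborel (A \<inter> {..a})"
        by (intro bexI[of _ a] emeasure_mono) auto
    qed
  qed
qed

lemma supB:
  fixes B :: "real set"
  assumes [measurable]: "B \<in> sets borel" and ne: "B \<noteq> {}"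
  shows "emeasure lborel B \<le> (SUP b\<in>B. emeasure lborel (B \<inter> {b<..}))"
proof (cases "bdd_below B")
  case False
  show ?thesis
  proof (rule sup_helper[where E="\<lambda>n. B \<inter> {- real n<..}"])
    show "range (\<lambda>n. B \<inter> {- real n<..}) \<subseteq> sets lborel" by auto
    show "incseq (\<lambda>n. B \<inter> {- real n<..})" by (auto simp: incseq_def)
    show "(\<Union>n. B \<inter> {- real n<..}) = B"
    proof safe
      fix x assume "x \<in> B"
      obtain n where "- x < real n" using reals_Archimedean2 by blast
      then show "x \<in> (\<Union>n. B \<inter> {- real n<..})" using \<open>x \<in> B\<close> by (auto intro!: exI[of _ n])
    qed
    fix n
    from False obtain b where "b \<in> B" "b < - real n" unfolding bdd_below_def by (meson not_le)
    then show "\<exists>b\<in>B. emeasure lborel (B \<inter> {- real n<..}) \<le> emeasure lborel (B \<inter> {b<..})"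
      by (intro bexI[of _ b] emeasure_mono) auto
  qed
next
  case True
  define S where "S = Inf B"
  have le: "S \<le> x" if "x \<in> B" for x using True that cInf_lower S_def by blast
  show ?thesis
  proof (cases "S \<in> B")
    case True
    have "emeasure lborel (B \<inter> {S<..}) = emeasure lborel (B - {S})"
      using le by (intro arg_cong[where f="emeasure lborel"]) force
    also have "\<dots> = emeasure lborel B"
      by (rule emeasure_Diff_null_set) (auto intro: emeasure_lborel_countable)
    finally show ?thesis using True by (metis SUP_upper)
  next
    case SA: False
    show ?thesis
    proof (rule sup_helper[where E="\<lambda>n. B \<inter> {S + 1 / Suc n<..}"])
      show "range (\<lambda>n. B \<inter> {S + 1 / Suc n<..}) \<subseteq> sets lborel" by auto
      show "incseq (\<lambda>n. B \<inter> {S + 1 / Suc n<..})"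
      proof (rule incseq_SucI)
        fix n
        have "1 / real (Suc (Suc n)) \<le> 1 / real (Suc n)" by (rule divide_left_mono) auto
        then show "B \<inter> {S + 1 / Suc n<..} \<subseteq> B \<inter> {S + 1 / Suc (Suc n)<..}" by auto
      qed
      show "(\<Union>n. B \<inter> {S + 1 / Suc n<..}) = B"
      proof safe
        fix x assume "x \<in> B"
        then have "S < x" using le[of x] SA by (cases "x = S") auto
        then obtain n where "inverse (real (Suc n)) < x - S"
          using reals_Archimedean by (metis diff_gt_0_iff_gt)
        then show "x \<in> (\<Union>n. B \<inter> {S + 1 / Suc n<..})" using \<open>x \<in> B\<close>
          by (auto simp: inverse_eq_divide intro!: exI[of _ n])
      qed
      fix n
      have "Inf B < S + 1 / Suc n" unfolding S_def[symmetric] by simp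
      then obtain b where "b \<in> B" "b < S + 1 / Suc n"
        using cInf_less_iff[OF ne True] by blast
      then show "\<exists>b\<in>B. emeasure lborel (B \<inter> {S + 1 / Suc n<..}) \<le> emeasure lborel (B \<inter> {b<..})"
        by (intro bexI[of _ b] emeasure_mono) auto
    qed
  qed
qed

lemma layer_cake:
  fixes f :: "real \<Rightarrow> real" assumes [measurable]: "f \<in> borel_measurable borel"
  shows "(\<integral>\<^sup>+x. ennreal (f x) \<partial>lborel) = (\<integral>\<^sup>+s. indicator {0<..} s * emeasure lborel {x. s < f x} \<partial>lborel)"
proof -
  define F where "F x s = (indicator {p::real\<times>real. 0 < snd p \<and> snd p < f (fst p)} (x, s) :: ennreal)" for x s
  have mF: "case_prod F \<in> borel_measurable (lborel \<Otimes>\<^sub>M lborel)"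
    unfolding F_def by (simp add: case_prod_beta')
  have "(\<integral>\<^sup>+x. ennreal (f x) \<partial>lborel) = (\<integral>\<^sup>+x. (\<integral>\<^sup>+s. F x s \<partial>lborel) \<partial>lborel)"
  proof (rule nn_integral_cong)
    fix x
    have "(\<integral>\<^sup>+s. F x s \<partial>lborel) = (\<integral>\<^sup>+s. indicator {0<..<f x} s \<partial>lborel)"
      by (rule nn_integral_cong) (simp add: F_def indicator_def)
    also have "\<dots> = emeasure lborel {0<..<f x}" by simp
    also have "\<dots> = ennreal (f x)"
      by (cases "0 \<le> f x") (auto simp: ennreal_neg)
    finally show "ennreal (f x) = (\<integral>\<^sup>+s. F x s \<partial>lborel)" ..
  qed
  also have "\<dots> = (\<integral>\<^sup>+s. (\<integral>\<^sup>+x. F x s \<partial>lborel) \<partial>lborel)"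
    by (rule lborel_pair.Fubini'[OF mF, symmetric])
  also have "\<dots> = (\<integral>\<^sup>+s. indicator {0<..} s * emeasure lborel {x. s < f x} \<partial>lborel)"
  proof (rule nn_integral_cong)
    fix s :: real
    show "(\<integral>\<^sup>+x. F x s \<partial>lborel) = indicator {0<..} s * emeasure lborel {x. s < f x}"
    proof (cases "0 < s")
      case True
      have "(\<integral>\<^sup>+x. F x s \<partial>lborel) = (\<integral>\<^sup>+x. indicator {x. s < f x} x \<partial>lborel)"
        by (rule nn_integral_cong) (use True in \<open>simp add: F_def indicator_def\<close>)
      also have "\<dots> = emeasure lborel {x. s < f x}" by simp
      finally show ?thesis using True by simp
    next
      case False
      then show ?thesis by (simp add: F_def indicator_def)
    qed
  qed
  finally show ?thesis .
qed


lemma bm: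
  fixes A B C :: "real set" and l :: real
  assumes [measurable]: "A \<in> sets borel" "B \<in> sets borel" "C \<in> sets borel"
    and l: "0 < l" "l < 1" and ne: "A \<noteq> {}" "B \<noteq> {}"
    and sub: "\<And>x y. x \<in> A \<Longrightarrow> y \<in> B \<Longrightarrow> (1 - l) * x + l * y \<in> C"
  shows "ennreal (1 - l) * emeasure lborel A + ennreal l * emeasure lborel B \<le> emeasure lborel C"
proof -
  have "ennreal (1 - l) * emeasure lborel A + ennreal l * emeasure lborel B
     \<le> ennreal (1 - l) * (SUP a\<in>A. emeasure lborel (A \<inter> {..a})) + ennreal l * (SUP b\<in>B. emeasure lborel (B \<inter> {b<..}))"
    by (intro add_mono mult_left_mono supA supB ne) auto
  also have "\<dots> = (SUP a\<in>A. ennreal (1 - l) * emeasure lborel (A \<inter> {..a})) + (SUP b\<in>B. ennreal l * emeasure lborel (B \<inter> {b<..}))"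
    by (simp add: SUP_mult_left_ennreal)
  also have "\<dots> = (SUP a\<in>A. ennreal (1 - l) * emeasure lborel (A \<inter> {..a}) + (SUP b\<in>B. ennreal l * emeasure lborel (B \<inter> {b<..})))"
    by (rule ennreal_SUP_add_left[symmetric]) (use ne in auto)
  also have "\<dots> \<le> emeasure lborel C"
  proof (rule SUP_least)
    fix a assume a: "a \<in> A"
    have "ennreal (1 - l) * emeasure lborel (A \<inter> {..a}) + (SUP b\<in>B. ennreal l * emeasure lborel (B \<inter> {b<..}))
      = (SUP b\<in>B. ennreal (1 - l) * emeasure lborel (A \<inter> {..a}) + ennreal l * emeasure lborel (B \<inter> {b<..}))"
      by (rule ennreal_SUP_add_right) (use ne in auto)
    also have "\<dots> \<le> emeasure lborel C"
      by (rule SUP_least, rule bm_point) (use a l sub in auto)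
    finally show "ennreal (1 - l) * emeasure lborel (A \<inter> {..a}) + (SUP b\<in>B. ennreal l * emeasure lborel (B \<inter> {b<..})) \<le> emeasure lborel C" .
  qed
  finally show ?thesis .
qed

lemma level_meas:
  fixes f :: "real \<Rightarrow> real" assumes [measurable]: "f \<in> borel_measurable borel"
  shows "(\<lambda>s. indicator {0<..} s * emeasure lborel {x. s < f x}) \<in> borel_measurable lborel"
proof -
  have eq: "indicator {0<..} s * emeasure lborel {x. s < f x} =
     (\<integral>\<^sup>+x. indicator {p::real\<times>real. 0 < fst p \<and> fst p < f (snd p)} (s, x) \<partial>lborel)" for s
  proof (cases "0 < s")
    case True
    have "(\<integral>\<^sup>+x. indicator {p::real\<times>real. 0 < fst p \<and> fst p < f (snd p)} (s, x) \<partial>lborel)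
       = (\<integral>\<^sup>+x. indicator {x. s < f x} x \<partial>lborel)"
      by (rule nn_integral_cong) (use True in \<open>simp add: indicator_def\<close>)
    then show ?thesis using True by simp
  qed (simp add: indicator_def)
  have "(\<lambda>s. \<integral>\<^sup>+x. indicator {p::real\<times>real. 0 < fst p \<and> fst p < f (snd p)} (s, x) \<partial>lborel) \<in> borel_measurable lborel"
    by (rule lborel.borel_measurable_nn_integral) (simp add: case_prod_beta')
  then show ?thesis unfolding eq .
qed

lemma pl_norm:
  fixes f g h :: "real \<Rightarrow> real" and l :: real
  assumes [measurable]: "f \<in> borel_measurable borel" "g \<in> borel_measurable borel" "h \<in> borel_measurable borel"
    and l: "0 < l" "l < 1"
    and f1: "\<And>x. f x \<le> 1" and g1: "\<And>x. g x \<le> 1"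
    and fs: "\<And>s. s < 1 \<Longrightarrow> \<exists>x. s < f x" and gs: "\<And>s. s < 1 \<Longrightarrow> \<exists>x. s < g x"
    and hyp: "\<And>x y. min (f x) (g y) \<le> h ((1 - l) * x + l * y)"
  shows "ennreal (1 - l) * (\<integral>\<^sup>+x. ennreal (f x) \<partial>lborel) + ennreal l * (\<integral>\<^sup>+x. ennreal (g x) \<partial>lborel)
      \<le> (\<integral>\<^sup>+x. ennreal (h x) \<partial>lborel)"
proof -
  note [measurable] = level_meas[OF assms(1)] level_meas[OF assms(2)]
  have "ennreal (1 - l) * (\<integral>\<^sup>+x. ennreal (f x) \<partial>lborel) + ennreal l * (\<integral>\<^sup>+x. ennreal (g x) \<partial>lborel)
    = ennreal (1 - l) * (\<integral>\<^sup>+s. indicator {0<..} s * emeasure lborel {x. s < f x} \<partial>lborel)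
      + ennreal l * (\<integral>\<^sup>+s. indicator {0<..} s * emeasure lborel {x. s < g x} \<partial>lborel)"
    by (simp add: layer_cake)
  also have "\<dots> = (\<integral>\<^sup>+s. ennreal (1 - l) * (indicator {0<..} s * emeasure lborel {x. s < f x})
      + ennreal l * (indicator {0<..} s * emeasure lborel {x. s < g x}) \<partial>lborel)"
    by (subst nn_integral_add) (auto simp: nn_integral_cmult)
  also have "\<dots> \<le> (\<integral>\<^sup>+s. indicator {0<..} s * emeasure lborel {x. s < h x} \<partial>lborel)"
  proof (rule nn_integral_mono)
    fix s :: real
    consider "s \<le> 0" | "0 < s" "s < 1" | "1 \<le> s" by linarith
    then show "ennreal (1 - l) * (indicator {0<..} s * emeasure lborel {x. s < f x})
      + ennreal l * (indicator {0<..} s * emeasure lborel {x. s < g x})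
      \<le> indicator {0<..} s * emeasure lborel {x. s < h x}"
    proof cases
      case 1 then show ?thesis by simp
    next
      case 2
      have "ennreal (1 - l) * emeasure lborel {x. s < f x} + ennreal l * emeasure lborel {x. s < g x}
          \<le> emeasure lborel {x. s < h x}"
      proof (rule bm)
        show "{x. s < f x} \<noteq> {}" using fs[OF 2(2)] by auto
        show "{x. s < g x} \<noteq> {}" using gs[OF 2(2)] by auto
        fix x y assume "x \<in> {x. s < f x}" "y \<in> {x. s < g x}"
        then have "s < min (f x) (g y)" by simp
        also note hyp[of x y]
        finally show "(1 - l) * x + l * y \<in> {x. s < h x}" by simp
      qed (use l in auto)
      then show ?thesis using 2 by simp
    next
      case 3
      have "{x. s < f x} = {}" "{x. s < g x} = {}" using f1 g1 3 by (auto, meson less_le_trans not_le)+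
      then show ?thesis by simp
    qed
  qed
  also have "\<dots> = (\<integral>\<^sup>+x. ennreal (h x) \<partial>lborel)"
    by (simp add: layer_cake)
  finally show ?thesis .
qed


lemma min_le_powr:
  fixes p q l :: real
  assumes "0 \<le> p" "0 \<le> q" "0 \<le> l" "l \<le> 1"
  shows "min p q \<le> p powr (1 - l) * q powr l"
proof (cases "min p q = 0")
  case True then show ?thesis by simp
next
  case False
  have "0 \<le> min p q" using assms by simp
  then have m: "0 < min p q" using False by linarith
  have "min p q = min p q powr (1 - l) * min p q powr l"
    using m by (simp add: powr_add[symmetric])
  also have "\<dots> \<le> p powr (1 - l) * q powr l"
    using m assms by (intro mult_mono powr_mono2) auto
  finally show ?thesis .
qed

lemma ennreal_lin:
  fixes X Y p q :: real
  assumes "0 \<le> X" "0 \<le> Y" "0 \<le> p" "0 \<le> q"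
  shows "ennreal (p * X + q * Y) = ennreal p * ennreal X + ennreal q * ennreal Y"
  using assms by (simp add: ennreal_plus ennreal_mult)

lemma pl_bdd:
  fixes f g h :: "real \<Rightarrow> real" and l K :: real
  assumes [measurable]: "f \<in> borel_measurable borel" "g \<in> borel_measurable borel" "h \<in> borel_measurable borel"
    and l: "0 < l" "l < 1"
    and nn: "\<And>x. 0 \<le> f x" "\<And>x. 0 \<le> g x" "\<And>x. 0 \<le> h x"
    and bd: "\<And>x. f x \<le> K" "\<And>x. g x \<le> K"
    and int: "integrable lborel f" "integrable lborel g" "integrable lborel h"
    and hyp: "\<And>x y. f x powr (1 - l) * g y powr l \<le> h ((1 - l) * x + l * y)"
  shows "(integral\<^sup>L lborel f) powr (1 - l) * (integral\<^sup>L lborel g) powr l \<le> integral\<^sup>L lborel h"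
proof -
  have Ih: "0 \<le> integral\<^sup>L lborel h" using nn by simp
  have If: "0 \<le> integral\<^sup>L lborel f" and Ig: "0 \<le> integral\<^sup>L lborel g" using nn by simp_all
  show ?thesis
  proof (cases "integral\<^sup>L lborel f = 0 \<or> integral\<^sup>L lborel g = 0")
    case True then show ?thesis using Ih by auto
  next
    case False
    then have Ifp: "0 < integral\<^sup>L lborel f" and Igp: "0 < integral\<^sup>L lborel g" using If Ig by auto
    define a where "a = Sup (range f)"
    define b where "b = Sup (range g)"
    have bdf: "bdd_above (range f)" and bdg: "bdd_above (range g)" using bd by (auto intro!: bdd_aboveI)
    have fa: "f x \<le> a" for x unfolding a_def using bdf by (intro cSup_upper) auto
    have gb: "g x \<le> b" for x unfolding b_def using bdg by (intro cSup_upper) auto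
    have a0: "0 < a"
    proof (rule ccontr)
      assume "\<not> 0 < a"
      then have "f = (\<lambda>_. 0)" using fa nn by (meson antisym not_le order.trans ext)
      then have "integral\<^sup>L lborel f = 0" by simp
      then show False using Ifp by simp
    qed
    have b0: "0 < b"
    proof (rule ccontr)
      assume "\<not> 0 < b"
      then have "g = (\<lambda>_. 0)" using gb nn by (meson antisym not_le order.trans ext)
      then have "integral\<^sup>L lborel g = 0" by simp
      then show False using Igp by simp
    qed
    define c where "c = a powr (1 - l) * b powr l"
    have c0: "0 < c" unfolding c_def using a0 b0 by simp
    define F where "F x = f x / a" for x
    define G where "G x = g x / b" for x
    define H where "H x = h x / c" for x
    have [measurable]: "F \<in> borel_measurable borel" "G \<in> borel_measurable borel" "H \<in> borel_measurable borel"
      unfolding F_def G_def H_def by measurable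
    have key: "ennreal (1 - l) * (\<integral>\<^sup>+x. ennreal (F x) \<partial>lborel) + ennreal l * (\<integral>\<^sup>+x. ennreal (G x) \<partial>lborel)
      \<le> (\<integral>\<^sup>+x. ennreal (H x) \<partial>lborel)"
    proof (rule pl_norm)
      show "F x \<le> 1" for x unfolding F_def using fa a0 by simp
      show "G x \<le> 1" for x unfolding G_def using gb b0 by simp
      show "\<exists>x. s < F x" if "s < 1" for s
      proof -
        have "s * a < Sup (range f)" using that a0 unfolding a_def[symmetric] by simp
        then obtain x where "s * a < f x" using less_cSup_iff[OF _ bdf] by auto
        then show ?thesis unfolding F_def using a0 by (auto simp: field_simps)
      qed
      show "\<exists>x. s < G x" if "s < 1" for s
      proof -
        have "s * b < Sup (range g)" using that b0 unfolding b_def[symmetric] by simp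
        then obtain x where "s * b < g x" using less_cSup_iff[OF _ bdg] by auto
        then show ?thesis unfolding G_def using b0 by (auto simp: field_simps)
      qed
      fix x y
      have "min (F x) (G y) \<le> F x powr (1 - l) * G y powr l"
        using nn a0 b0 l unfolding F_def G_def by (intro min_le_powr) auto
      also have "\<dots> = (f x powr (1 - l) * g y powr l) / c"
        unfolding F_def G_def c_def using nn a0 b0 by (simp add: powr_divide)
      also have "\<dots> \<le> H ((1 - l) * x + l * y)"
        unfolding H_def using c0 hyp[of x y] by (simp add: divide_right_mono)
      finally show "min (F x) (G y) \<le> H ((1 - l) * x + l * y)" .
    qed (use l in auto)
    have eF: "(\<integral>\<^sup>+x. ennreal (F x) \<partial>lborel) = ennreal (integral\<^sup>L lborel f / a)"
      unfolding F_def using int nn a0 by (subst nn_integral_eq_integral) auto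
    have eG: "(\<integral>\<^sup>+x. ennreal (G x) \<partial>lborel) = ennreal (integral\<^sup>L lborel g / b)"
      unfolding G_def using int nn b0 by (subst nn_integral_eq_integral) auto
    have eH: "(\<integral>\<^sup>+x. ennreal (H x) \<partial>lborel) = ennreal (integral\<^sup>L lborel h / c)"
      unfolding H_def using int nn c0 by (subst nn_integral_eq_integral) auto
    have "ennreal ((1 - l) * (integral\<^sup>L lborel f / a) + l * (integral\<^sup>L lborel g / b))
      \<le> ennreal (integral\<^sup>L lborel h / c)"
    proof -
      have nX: "0 \<le> integral\<^sup>L lborel f / a" "0 \<le> integral\<^sup>L lborel g / b" using If Ig a0 b0 by auto
      have "ennreal ((1 - l) * (integral\<^sup>L lborel f / a) + l * (integral\<^sup>L lborel g / b))
        = ennreal (1 - l) * ennreal (integral\<^sup>L lborel f / a) + ennreal l * ennreal (integral\<^sup>L lborel g / b)"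
        using ennreal_lin[OF nX, of "1 - l" l] l by simp
      then show ?thesis using key unfolding eF eG eH by simp
    qed
    then have real: "(1 - l) * (integral\<^sup>L lborel f / a) + l * (integral\<^sup>L lborel g / b) \<le> integral\<^sup>L lborel h / c"
      using Ih c0 by (simp add: ennreal_le_iff)
    have "(integral\<^sup>L lborel f) powr (1 - l) * (integral\<^sup>L lborel g) powr l
        = c * ((integral\<^sup>L lborel f / a) powr (1 - l) * (integral\<^sup>L lborel g / b) powr l)"
      unfolding c_def using a0 b0 If Ig by (simp add: powr_divide)
    also have "\<dots> \<le> c * ((1 - l) * (integral\<^sup>L lborel f / a) + l * (integral\<^sup>L lborel g / b))"
      using c0 Ifp Igp a0 b0 l by (intro mult_left_mono Youngs_inequality_0) auto
    also have "\<dots> \<le> c * (integral\<^sup>L lborel h / c)"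
      using c0 real by (intro mult_left_mono) auto
    also have "\<dots> = integral\<^sup>L lborel h" using c0 by simp
    finally show ?thesis .
  qed
qed


lemma trunc_lim:
  fixes f :: "real \<Rightarrow> real"
  assumes [measurable]: "f \<in> borel_measurable borel" and nn: "\<And>x. 0 \<le> f x" and int: "integrable lborel f"
  shows "(\<lambda>n. integral\<^sup>L lborel (\<lambda>x. min (f x) (real n))) \<longlonglongrightarrow> integral\<^sup>L lborel f"
    and "\<And>n. integrable lborel (\<lambda>x. min (f x) (real n))"
proof -
  have lim: "AE x in lborel. (\<lambda>n. min (f x) (real n)) \<longlonglongrightarrow> f x"
  proof (rule AE_I2, rule tendsto_eventually)
    fix x
    obtain N where "f x \<le> real N" using real_arch_simple by blast
    then show "\<forall>\<^sub>F n in sequentially. min (f x) (real n) = f x"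
      unfolding eventually_sequentially by (intro exI[of _ N]) auto
  qed
  have bd: "AE x in lborel. norm (min (f x) (real n)) \<le> f x" for n
    using nn by (intro AE_I2) auto
  show "(\<lambda>n. integral\<^sup>L lborel (\<lambda>x. min (f x) (real n))) \<longlonglongrightarrow> integral\<^sup>L lborel f"
    by (rule integral_dominated_convergence[OF _ _ int lim bd]) auto
  show "integrable lborel (\<lambda>x. min (f x) (real n))" for n
    by (rule integrable_dominated_convergence2[OF _ _ int lim bd]) auto
qed

lemma pl:
  fixes f g h :: "real \<Rightarrow> real" and l :: real
  assumes [measurable]: "f \<in> borel_measurable borel" "g \<in> borel_measurable borel" "h \<in> borel_measurable borel"
    and l: "0 < l" "l < 1"
    and nn: "\<And>x. 0 \<le> f x" "\<And>x. 0 \<le> g x" "\<And>x. 0 \<le> h x"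
    and int: "integrable lborel f" "integrable lborel g" "integrable lborel h"
    and hyp: "\<And>x y. f x powr (1 - l) * g y powr l \<le> h ((1 - l) * x + l * y)"
  shows "(integral\<^sup>L lborel f) powr (1 - l) * (integral\<^sup>L lborel g) powr l \<le> integral\<^sup>L lborel h"
proof -
  define fn where "fn n x = min (f x) (real n)" for n x
  define gn where "gn n x = min (g x) (real n)" for n x
  note lf = trunc_lim[OF assms(1) nn(1) int(1)]
  note lg = trunc_lim[OF assms(2) nn(2) int(2)]
  have step: "(integral\<^sup>L lborel (fn n)) powr (1 - l) * (integral\<^sup>L lborel (gn n)) powr l \<le> integral\<^sup>L lborel h" for n
  proof (rule pl_bdd[where K="real n"])
    show "fn n \<in> borel_measurable borel" "gn n \<in> borel_measurable borel" unfolding fn_def gn_def by measurable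
    show "integrable lborel (fn n)" "integrable lborel (gn n)"
      unfolding fn_def gn_def using lf(2) lg(2) by auto
    fix x y
    have "fn n x powr (1 - l) * gn n y powr l \<le> f x powr (1 - l) * g y powr l"
      unfolding fn_def gn_def using nn l by (intro mult_mono powr_mono2) auto
    also note hyp[of x y]
    finally show "fn n x powr (1 - l) * gn n y powr l \<le> h ((1 - l) * x + l * y)" .
  qed (use l nn int fn_def gn_def in auto)
  have "(\<lambda>n. (integral\<^sup>L lborel (fn n)) powr (1 - l) * (integral\<^sup>L lborel (gn n)) powr l)
     \<longlonglongrightarrow> (integral\<^sup>L lborel f) powr (1 - l) * (integral\<^sup>L lborel g) powr l"
  proof (intro tendsto_mult tendsto_powr')
    show "(\<lambda>n. integral\<^sup>L lborel (fn n)) \<longlonglongrightarrow> integral\<^sup>L lborel f" using lf(1) unfolding fn_def .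
    show "(\<lambda>n. integral\<^sup>L lborel (gn n)) \<longlonglongrightarrow> integral\<^sup>L lborel g" using lg(1) unfolding gn_def .
    show "integral\<^sup>L lborel f \<noteq> 0 \<or> 0 < 1 - l \<and> (\<forall>\<^sub>F n in sequentially. 0 \<le> integral\<^sup>L lborel (fn n))"
      using l nn unfolding fn_def by auto
    show "integral\<^sup>L lborel g \<noteq> 0 \<or> 0 < l \<and> (\<forall>\<^sub>F n in sequentially. 0 \<le> integral\<^sup>L lborel (gn n))"
      using l nn unfolding gn_def by auto
  qed auto
  then show ?thesis
    by (rule LIMSEQ_le_const2) (use step in auto)
qed


context
  fixes \<psi> :: "real \<Rightarrow> real"
  assumes pd: "prob_density \<psi>" and lc: "log_concave \<psi>"
begin

lemma psi_nn: "0 \<le> \<psi> x" using pd unfolding prob_density_def by auto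
lemma psi_int: "integrable lborel \<psi>" using pd unfolding prob_density_def by auto
lemma psi_one: "integral\<^sup>L lborel \<psi> = 1" using pd unfolding prob_density_def by auto
lemma psi_meas[measurable]: "\<psi> \<in> borel_measurable borel"
  using borel_measurable_integrable[OF psi_int] by simp
lemma psi_lc: "0 \<le> l \<Longrightarrow> l \<le> 1 \<Longrightarrow> \<psi> x powr (1 - l) * \<psi> y powr l \<le> \<psi> ((1 - l) * x + l * y)"
  using lc unfolding log_concave_def by auto

lemma Psi_eq: "cdf_of \<psi> x = integral\<^sup>L lborel (\<lambda>t. indicator {..x} t * \<psi> t)"
  unfolding cdf_of_def set_lebesgue_integral_def by simp

lemma ind_int: "integrable lborel (\<lambda>t. indicator S t * \<psi> t)" if [measurable]: "S \<in> sets borel" for S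
  by (rule Bochner_Integration.integrable_bound[OF psi_int]) (auto simp: psi_nn indicator_def)

lemma Psi_nn: "0 \<le> cdf_of \<psi> x"
  unfolding Psi_eq by (rule Bochner_Integration.integral_nonneg) (simp add: psi_nn)

lemma Psi_le1: "cdf_of \<psi> x \<le> 1"
proof -
  have "integral\<^sup>L lborel (\<lambda>t. indicator {..x} t * \<psi> t) \<le> integral\<^sup>L lborel \<psi>"
    by (rule integral_mono[OF ind_int psi_int]) (auto simp: psi_nn indicator_def)
  then show ?thesis unfolding Psi_eq psi_one .
qed

lemma Psi_mono: "mono (cdf_of \<psi>)"
proof (rule monoI)
  fix x y :: real assume "x \<le> y"
  then show "cdf_of \<psi> x \<le> cdf_of \<psi> y"
    unfolding Psi_eq by (intro integral_mono ind_int) (auto simp: psi_nn indicator_def)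
qed

lemma Psi_meas[measurable]: "cdf_of \<psi> \<in> borel_measurable borel"
  by (rule borel_measurable_mono[OF Psi_mono])

lemma Psi_lc:
  assumes l: "0 < l" "l < 1"
  shows "cdf_of \<psi> x powr (1 - l) * cdf_of \<psi> y powr l \<le> cdf_of \<psi> ((1 - l) * x + l * y)"
  unfolding Psi_eq
proof (rule pl)
  fix s u
  show "(indicator {..x} s * \<psi> s) powr (1 - l) * (indicator {..y} u * \<psi> u) powr l
     \<le> indicator {..(1 - l) * x + l * y} ((1 - l) * s + l * u) * \<psi> ((1 - l) * s + l * u)"
  proof (cases "s \<le> x \<and> u \<le> y")
    case True
    then have "(1 - l) * s + l * u \<le> (1 - l) * x + l * y"
      using l by (intro add_mono mult_left_mono) auto
    then show ?thesis using True psi_lc[of l s u] l by simp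
  next
    case False
    then show ?thesis using psi_nn by (auto simp: indicator_def)
  qed
qed (use l psi_nn ind_int in auto)

definition FF :: "real^'n \<Rightarrow> 'n \<Rightarrow> real \<Rightarrow> real" where
  "FF v m t = \<psi> t * (\<Prod>j\<in>UNIV - {m}. cdf_of \<psi> (t + v$m - v$j))"

lemma FF_meas[measurable]: "FF v m \<in> borel_measurable borel"
  unfolding FF_def by measurable

lemma FF_nn: "0 \<le> FF v m t"
  unfolding FF_def by (intro mult_nonneg_nonneg prod_nonneg psi_nn) (auto intro: Psi_nn)

lemma FF_le: "FF v m t \<le> \<psi> t"
proof -
  have "(\<Prod>j\<in>UNIV - {m}. cdf_of \<psi> (t + v$m - v$j)) \<le> 1"
    by (rule prod_le_1) (auto intro: Psi_nn Psi_le1)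
  then show ?thesis unfolding FF_def using psi_nn[of t] by (simp add: mult_left_le)
qed

lemma FF_int: "integrable lborel (FF v m)"
  by (rule Bochner_Integration.integrable_bound[OF psi_int]) (auto simp: FF_nn FF_le psi_nn)

lemma breve_eq: "breve_Psi \<psi> v m = integral\<^sup>L lborel (FF v m)"
  unfolding breve_Psi_def FF_def ..

lemma breve_lc_inner:
  fixes v0 v1 :: "real^'n"
  assumes l: "0 < l" "l < 1"
  shows "breve_Psi \<psi> v0 m powr (1 - l) * breve_Psi \<psi> v1 m powr l
       \<le> breve_Psi \<psi> ((1 - l) *\<^sub>R v0 + l *\<^sub>R v1) m"
  unfolding breve_eq
proof (rule pl)
  fix s u
  define vt where "vt = (1 - l) *\<^sub>R v0 + l *\<^sub>R v1"
  let ?P = "\<lambda>v t j. cdf_of \<psi> (t + v$m - v$j)"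
  have "FF v0 m s powr (1 - l) * FF v1 m u powr l
     = (\<psi> s powr (1 - l) * \<psi> u powr l) * (\<Prod>j\<in>UNIV - {m}. ?P v0 s j powr (1 - l) * ?P v1 u j powr l)"
    unfolding FF_def
    by (simp add: powr_mult psi_nn prod_nonneg Psi_nn prod_powr_distrib prod.distrib)
  also have "\<dots> \<le> \<psi> ((1 - l) * s + l * u) * (\<Prod>j\<in>UNIV - {m}. ?P vt ((1 - l) * s + l * u) j)"
  proof (rule mult_mono)
    show "\<psi> s powr (1 - l) * \<psi> u powr l \<le> \<psi> ((1 - l) * s + l * u)" using psi_lc l by simp
    show "(\<Prod>j\<in>UNIV - {m}. ?P v0 s j powr (1 - l) * ?P v1 u j powr l) \<le> (\<Prod>j\<in>UNIV - {m}. ?P vt ((1 - l) * s + l * u) j)"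
    proof (rule prod_mono, intro conjI)
      fix j
      show "0 \<le> ?P v0 s j powr (1 - l) * ?P v1 u j powr l" by simp
      have "?P v0 s j powr (1 - l) * ?P v1 u j powr l
          \<le> cdf_of \<psi> ((1 - l) * (s + v0$m - v0$j) + l * (u + v1$m - v1$j))"
        by (rule Psi_lc[OF l])
      also have "(1 - l) * (s + v0$m - v0$j) + l * (u + v1$m - v1$j) = (1 - l) * s + l * u + vt$m - vt$j"
        unfolding vt_def by (simp add: algebra_simps)
      finally show "?P v0 s j powr (1 - l) * ?P v1 u j powr l \<le> ?P vt ((1 - l) * s + l * u) j" .
    qed
  qed (auto simp: psi_nn prod_nonneg Psi_nn)
  also have "\<dots> = FF vt m ((1 - l) * s + l * u)" unfolding FF_def ..
  finally show "FF v0 m s powr (1 - l) * FF v1 m u powr l \<le> FF ((1 - l) *\<^sub>R v0 + l *\<^sub>R v1) m ((1 - l) * s + l * u)"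
    unfolding vt_def .
qed (use l FF_nn FF_int in auto)

lemma breve_lc: "log_concave (\<lambda>v::real^'n. breve_Psi \<psi> v m)"
  unfolding log_concave_def
proof (intro conjI allI impI)
  fix v :: "real^'n"
  show "0 \<le> breve_Psi \<psi> v m" unfolding breve_eq by (rule Bochner_Integration.integral_nonneg) (simp add: FF_nn)
next
  fix x y :: "real^'n" and t :: real
  assume t: "0 \<le> t \<and> t \<le> 1"
  have nx: "0 \<le> breve_Psi \<psi> x m" unfolding breve_eq by (rule Bochner_Integration.integral_nonneg) (simp add: FF_nn)
  have ny: "0 \<le> breve_Psi \<psi> y m" unfolding breve_eq by (rule Bochner_Integration.integral_nonneg) (simp add: FF_nn)
  consider "t = 0" | "t = 1" | "0 < t" "t < 1" using t by linarith
  then show "breve_Psi \<psi> x m powr (1 - t) * breve_Psi \<psi> y m powr t \<le> breve_Psi \<psi> ((1 - t) *\<^sub>R x + t *\<^sub>R y) m"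
  proof cases
    case 1 then show ?thesis using nx ny by auto
  next
    case 2 then show ?thesis using nx ny by auto
  next
    case 3 then show ?thesis by (rule breve_lc_inner)
  qed
qed

end

theorem proposition3p3:
  fixes \<psi> :: "real \<Rightarrow> real" and m :: "'n::finite"
  assumes "prob_density \<psi>"
    and "log_concave \<psi>"
    and "CARD('n) \<ge> 2"
  shows "log_concave (\<lambda>v::real^'n. breve_Psi \<psi> v m)"
  using breve_lc[OF assms(1,2)] .

end
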